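(* Let $I$ be a bounded open interval containing $0$ and let $f\in C^\infty(I)$ be real-valued. For integers $k\ge 1$, $n\ge 0$ and $t\in I$ put $$f_{k,n}(t):=\frac{(-1)^n}{n!}\,t^n f^{(n+k)}(t).$$ Suppose that for some integer $k\ge1$ the sequence $(f_{k,n})_{n\ge0}$ converges uniformly on $I$. (a) If $k\ge 2$, then the series $\hat f(t)$ converges uniformly on $I$ and $\hat f(t)=f(0)$ for all $t\in I$. (b) If $k=1$, let $\check f(t):=\lim_{n\to\infty}f_{1,n}(t)$ (uniform limit on $I$). Then $\hat f$ converges uniformly on $I$, its sum is differentiable on $I$, and $\frac{d}{dt}\hat f(t)=\check f(t)$ for all $t\in I$. In particular, if $\check f\equiv 0$ on $I$ (i.e. $\frac{(-1)^n}{n!}t^nf^{(n+1)}(t)\to0$ uniformly on $I$), then $\hat f(t)=f(0)$ for all $t\in I$.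
   Context: For a smooth function $f$ on an interval containing the point $t$, $\hat f(t)$ denotes the series $\hat f(t):=\sum_{n=0}^{\infty}\frac{(-1)^n}{n!}\,t^n f^{(n)}(t)$; "$\hat f$ converges (uniformly) on a set" means its partial sums $\sum_{n=0}^N\frac{(-1)^n}{n!}t^nf^{(n)}(t)$ converge (uniformly) on that set, and $\hat f(t)$ also denotes the sum. *)

theory Defs
  imports "HOL-Analysis.Analysis"
begin

definition nderiv :: "nat \<Rightarrow> (real \<Rightarrow> real) \<Rightarrow> real \<Rightarrow> real" where
  "nderiv n f = (deriv ^^ n) f"

definition smooth_on :: "real set \<Rightarrow> (real \<Rightarrow> real) \<Rightarrow> bool" where
  "smooth_on S f \<longleftrightarrow> (\<forall>n. \<forall>t\<in>S. (nderiv n f has_real_derivative nderiv (Suc n) f t) (at t))"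

definition fkn :: "(real \<Rightarrow> real) \<Rightarrow> nat \<Rightarrow> nat \<Rightarrow> real \<Rightarrow> real" where
  "fkn f k n t = (-1)^n / fact n * t^n * nderiv (n + k) f t"

definition fhat_term :: "(real \<Rightarrow> real) \<Rightarrow> nat \<Rightarrow> real \<Rightarrow> real" where
  "fhat_term f n t = (-1)^n / fact n * t^n * nderiv n f t"

definition fhat_partial :: "(real \<Rightarrow> real) \<Rightarrow> nat \<Rightarrow> real \<Rightarrow> real" where
  "fhat_partial f N t = (\<Sum>n\<le>N. fhat_term f n t)"

definition fhat :: "(real \<Rightarrow> real) \<Rightarrow> real \<Rightarrow> real" where
  "fhat f t = (\<Sum>n. fhat_term f n t)"

definition fcheck :: "(real \<Rightarrow> real) \<Rightarrow> real \<Rightarrow> real" where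
  "fcheck f t = lim (\<lambda>n. fkn f 1 n t)"

end

theory Submission
  imports Defs
begin

lemma mvt_bound:
  fixes h h' :: "real \<Rightarrow> real"
  assumes ab: "a < 0" "0 < b"
    and d: "\<And>t. t \<in> {a<..<b} \<Longrightarrow> (h has_real_derivative h' t) (at t)"
    and bd: "\<And>t. t \<in> {a<..<b} \<Longrightarrow> \<bar>h' t\<bar> \<le> e"
    and t: "t \<in> {a<..<b}"
  shows "\<bar>h t - h 0\<bar> \<le> e * (b - a)"
proof -
  have 0: "0 \<in> {a<..<b}" using ab by auto
  have "norm (h t - h 0) \<le> e * norm (t - 0)"
    apply (rule field_differentiable_bound[where S="{a<..<b}" and f'=h'])
    using d bd t 0 by (auto intro: has_field_derivative_at_within)
  moreover have "e \<ge> 0" using bd[OF 0] by linarith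
  moreover have "\<bar>t\<bar> \<le> b - a" using t ab by auto
  ultimately show ?thesis
    by (smt (verit) mult_left_mono real_norm_def)
qed

lemma lemZ:
  fixes F F' :: "nat \<Rightarrow> real \<Rightarrow> real"
  assumes ab: "a < 0" "0 < b"
    and d: "\<And>n t. t \<in> {a<..<b} \<Longrightarrow> (F n has_real_derivative F' n t) (at t)"
    and u: "\<And>e. e > 0 \<Longrightarrow> \<exists>N. \<forall>n\<ge>N. \<forall>t\<in>{a<..<b}. \<bar>F' n t\<bar> < e"
    and z: "\<And>e. e > 0 \<Longrightarrow> \<exists>N. \<forall>n\<ge>N. \<bar>F n 0 - c\<bar> < e"
    and e: "e > 0"
  shows "\<exists>N. \<forall>n\<ge>N. \<forall>t\<in>{a<..<b}. \<bar>F n t - c\<bar> < e"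
proof -
  define e1 where "e1 = e / (2 * (b - a))"
  have e1: "e1 > 0" using e ab by (simp add: e1_def)
  have e1b: "e1 * (b - a) = e / 2" using ab by (simp add: e1_def field_simps)
  obtain N1 where N1: "\<forall>n\<ge>N1. \<forall>t\<in>{a<..<b}. \<bar>F' n t\<bar> < e1" using u[OF e1] by blast
  obtain N2 where N2: "\<forall>n\<ge>N2. \<bar>F n 0 - c\<bar> < e/2" using z[of "e/2"] e by auto
  show ?thesis
  proof (intro exI[of _ "max N1 N2"] allI impI ballI)
    fix n t assume n: "max N1 N2 \<le> n" and t: "t \<in> {a<..<b}"
    have "\<bar>F n t - F n 0\<bar> \<le> e1 * (b - a)"
      apply (rule mvt_bound[OF ab d _ t])
      using N1 n by (auto simp: less_imp_le)
    moreover have "\<bar>F n 0 - c\<bar> < e/2" using N2 n by auto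
    ultimately show "\<bar>F n t - c\<bar> < e" using e1b by linarith
  qed
qed

lemma lemC:
  fixes F F' :: "nat \<Rightarrow> real \<Rightarrow> real"
  assumes ab: "a < 0" "0 < b"
    and d: "\<And>n t. t \<in> {a<..<b} \<Longrightarrow> (F n has_real_derivative F' n t) (at t)"
    and u: "\<And>e. e > 0 \<Longrightarrow> \<exists>N. \<forall>m\<ge>N. \<forall>n\<ge>N. \<forall>t\<in>{a<..<b}. \<bar>F' m t - F' n t\<bar> < e"
    and z: "\<And>n. F n 0 = c"
  shows "uniformly_Cauchy_on {a<..<b} F"
proof (rule uniformly_Cauchy_onI)
  fix e :: real assume e: "e > 0"
  define e1 where "e1 = e / (2 * (b - a))"
  have e1: "e1 > 0" using e ab by (simp add: e1_def)
  have e1b: "e1 * (b - a) = e / 2" using ab by (simp add: e1_def field_simps)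
  obtain N where N: "\<forall>m\<ge>N. \<forall>n\<ge>N. \<forall>t\<in>{a<..<b}. \<bar>F' m t - F' n t\<bar> < e1" using u[OF e1] by blast
  show "\<exists>M. \<forall>x\<in>{a<..<b}. \<forall>m\<ge>M. \<forall>n\<ge>M. dist (F m x) (F n x) < e"
  proof (intro exI[of _ N] allI impI ballI)
    fix m n t assume t: "t \<in> {a<..<b}" and m: "N \<le> m" and n: "N \<le> n"
    have "\<bar>(\<lambda>t. F m t - F n t) t - (\<lambda>t. F m t - F n t) 0\<bar> \<le> e1 * (b - a)"
      apply (rule mvt_bound[OF ab _ _ t, where h'="\<lambda>t. F' m t - F' n t"])
      using N m n d by (auto simp: less_imp_le intro!: DERIV_diff)
    then show "dist (F m t) (F n t) < e" using e1b e z by (simp add: dist_real_def)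
  qed
qed

lemma dterm:
  fixes g :: "real \<Rightarrow> real"
  assumes "(g has_real_derivative g') (at t)"
  shows "((\<lambda>t. c * t^n * g t) has_real_derivative
          (c * (of_nat n * t^(n-1)) * g t + c * t^n * g')) (at t)"
  by (rule derivative_eq_intros refl assms | simp)+

lemma smooth_D:
  assumes "smooth_on S f" "t \<in> S"
  shows "(nderiv n f has_real_derivative nderiv (Suc n) f t) (at t)"
  using assms unfolding smooth_on_def by blast

lemma partial_deriv:
  assumes "smooth_on S f" "t \<in> S"
  shows "(fhat_partial f N has_real_derivative fkn f 1 N t) (at t)"
proof (induction N)
  case 0
  have "fhat_partial f 0 = nderiv 0 f"
    by (auto simp: fhat_partial_def fhat_term_def fun_eq_iff)
  then show ?case using smooth_D[OF assms, of 0] by (simp add: fkn_def)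
next
  case (Suc N)
  have e: "fhat_partial f (Suc N) = (\<lambda>t. fhat_partial f N t +
      ((-1)^(Suc N) / fact (Suc N)) * t^(Suc N) * nderiv (Suc N) f t)"
    by (auto simp: fhat_partial_def fhat_term_def fun_eq_iff)
  have "(fhat_partial f (Suc N) has_real_derivative fkn f 1 N t +
      (((-1)^(Suc N) / fact (Suc N)) * (of_nat (Suc N) * t^(Suc N - 1)) * nderiv (Suc N) f t
       + ((-1)^(Suc N) / fact (Suc N)) * t^(Suc N) * nderiv (Suc (Suc N)) f t)) (at t)"
    unfolding e by (intro DERIV_add Suc dterm smooth_D[OF assms])
  moreover have "fkn f 1 N t +
      (((-1)^(Suc N) / fact (Suc N)) * (of_nat (Suc N) * t^(Suc N - 1)) * nderiv (Suc N) f t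
       + ((-1)^(Suc N) / fact (Suc N)) * t^(Suc N) * nderiv (Suc (Suc N)) f t) = fkn f 1 (Suc N) t"
    by (simp add: fkn_def fact_Suc field_simps del: of_nat_Suc)
  ultimately show ?case by simp
qed

lemma fkn_deriv:
  assumes "smooth_on S f" "t \<in> S"
  shows "((\<lambda>t. fkn f j (Suc n) t) has_real_derivative
           fkn f (Suc j) (Suc n) t - fkn f (Suc j) n t) (at t)"
proof -
  have e: "(\<lambda>t. fkn f j (Suc n) t) = (\<lambda>t. ((-1)^(Suc n) / fact (Suc n)) * t^(Suc n) * nderiv (Suc n + j) f t)"
    by (auto simp: fkn_def)
  have "((\<lambda>t. fkn f j (Suc n) t) has_real_derivative
       ((-1)^(Suc n) / fact (Suc n)) * (of_nat (Suc n) * t^(Suc n - 1)) * nderiv (Suc n + j) f t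
       + ((-1)^(Suc n) / fact (Suc n)) * t^(Suc n) * nderiv (Suc (Suc n + j)) f t) (at t)"
    unfolding e by (intro dterm smooth_D[OF assms])
  moreover have "((-1)^(Suc n) / fact (Suc n)) * (of_nat (Suc n) * t^(Suc n - 1)) * nderiv (Suc n + j) f t
       + ((-1)^(Suc n) / fact (Suc n)) * t^(Suc n) * nderiv (Suc (Suc n + j)) f t
      = fkn f (Suc j) (Suc n) t - fkn f (Suc j) n t"
    by (simp add: fkn_def fact_Suc field_simps del: of_nat_Suc)
  ultimately show ?thesis by simp
qed


lemma ulim_eps:
  fixes F :: "nat \<Rightarrow> 'a \<Rightarrow> real"
  assumes "uniform_limit S F g sequentially" "e > 0"
  shows "\<exists>N. \<forall>n\<ge>N. \<forall>t\<in>S. \<bar>F n t - g t\<bar> < e"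
  using assms unfolding uniform_limit_sequentially_iff dist_real_def by auto

lemma step_desc:
  assumes ab: "a < 0" "0 < b" and sm: "smooth_on {a<..<b} f"
    and uc: "uniformly_convergent_on {a<..<b} (fkn f (Suc j))"
  shows "uniform_limit {a<..<b} (fkn f j) (\<lambda>_. 0) sequentially"
proof -
  obtain g where g: "uniform_limit {a<..<b} (fkn f (Suc j)) g sequentially"
    using uc unfolding uniformly_convergent_on_def by blast
  have Z: "\<exists>N. \<forall>n\<ge>N. \<forall>t\<in>{a<..<b}. \<bar>fkn f j (Suc n) t - 0\<bar> < e" if e: "e > 0" for e
  proof (rule lemZ[OF ab, where F'="\<lambda>n t. fkn f (Suc j) (Suc n) t - fkn f (Suc j) n t"])
    show "((\<lambda>t. fkn f j (Suc n) t) has_real_derivative fkn f (Suc j) (Suc n) t - fkn f (Suc j) n t) (at t)"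
      if "t \<in> {a<..<b}" for n t using fkn_deriv[OF sm that] .
    show "\<exists>N. \<forall>n\<ge>N. \<forall>t\<in>{a<..<b}. \<bar>fkn f (Suc j) (Suc n) t - fkn f (Suc j) n t\<bar> < e"
      if "e > 0" for e
    proof -
      obtain N where N: "\<forall>n\<ge>N. \<forall>t\<in>{a<..<b}. \<bar>fkn f (Suc j) n t - g t\<bar> < e/2"
        using ulim_eps[OF g, of "e/2"] \<open>e > 0\<close> by auto
      show ?thesis
      proof (intro exI[of _ N] allI impI ballI)
        fix n t assume "N \<le> n" "t \<in> {a<..<b}"
        then have "\<bar>fkn f (Suc j) (Suc n) t - g t\<bar> < e/2" "\<bar>fkn f (Suc j) n t - g t\<bar> < e/2"
          using N by auto
        then show "\<bar>fkn f (Suc j) (Suc n) t - fkn f (Suc j) n t\<bar> < e" by linarith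
      qed
    qed
    show "\<exists>N. \<forall>n\<ge>N. \<bar>fkn f j (Suc n) 0 - 0\<bar> < e" if "e > 0" for e
      using that by (simp add: fkn_def)
  qed (use e in auto)
  show ?thesis
    unfolding uniform_limit_sequentially_iff dist_real_def
  proof (intro allI impI)
    fix e :: real assume "e > 0"
    then obtain N where N: "\<forall>n\<ge>N. \<forall>t\<in>{a<..<b}. \<bar>fkn f j (Suc n) t - 0\<bar> < e" using Z by blast
    show "\<exists>N. \<forall>n\<ge>N. \<forall>x\<in>{a<..<b}. \<bar>fkn f j n x - 0\<bar> < e"
    proof (intro exI[of _ "Suc N"] allI impI ballI)
      fix n x assume "Suc N \<le> n" "x \<in> {a<..<b}"
      then show "\<bar>fkn f j n x - 0\<bar> < e" using N[rule_format, of "n - 1" x] by simp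
    qed
  qed
qed

lemma partial_at0: "fhat_partial f N 0 = f 0"
  by (induction N) (auto simp: fhat_partial_def fhat_term_def nderiv_def)

lemma final_zero:
  assumes ab: "a < 0" "0 < b" and sm: "smooth_on {a<..<b} f"
    and z: "uniform_limit {a<..<b} (fkn f 1) (\<lambda>_. 0) sequentially"
  shows "uniform_limit {a<..<b} (fhat_partial f) (\<lambda>_. f 0) sequentially"
    "\<forall>t\<in>{a<..<b}. (\<lambda>n. fhat_term f n t) sums f 0"
proof -
  show U: "uniform_limit {a<..<b} (fhat_partial f) (\<lambda>_. f 0) sequentially"
    unfolding uniform_limit_sequentially_iff dist_real_def
  proof (intro allI impI)
    fix e :: real assume e: "e > 0"
    show "\<exists>N. \<forall>n\<ge>N. \<forall>x\<in>{a<..<b}. \<bar>fhat_partial f n x - f 0\<bar> < e"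
    proof (rule lemZ[OF ab, where F'="fkn f 1"])
      show "(fhat_partial f n has_real_derivative fkn f 1 n t) (at t)"
        if "t \<in> {a<..<b}" for n t using partial_deriv[OF sm that] .
      show "\<exists>N. \<forall>n\<ge>N. \<forall>t\<in>{a<..<b}. \<bar>fkn f 1 n t\<bar> < e" if "e > 0" for e
        using ulim_eps[OF z that] by simp
      show "\<exists>N. \<forall>n\<ge>N. \<bar>fhat_partial f n 0 - f 0\<bar> < e" if "e > 0" for e
        using that by (simp add: partial_at0)
    qed (use e in auto)
  qed
  show "\<forall>t\<in>{a<..<b}. (\<lambda>n. fhat_term f n t) sums f 0"
  proof
    fix t assume "t \<in> {a<..<b}"
    from tendsto_uniform_limitI[OF U this]
    have "(\<lambda>n. fhat_partial f n t) \<longlonglongrightarrow> f 0" by simp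
    then show "(\<lambda>n. fhat_term f n t) sums f 0"
      unfolding sums_def LIMSEQ_lessThan_iff_atMost fhat_partial_def .
  qed
qed


lemma desc_all:
  assumes ab: "a < 0" "0 < b" and sm: "smooth_on {a<..<b} f"
    and uc: "uniformly_convergent_on {a<..<b} (fkn f k)"
  shows "d < k \<Longrightarrow> uniformly_convergent_on {a<..<b} (fkn f (k - d))"
proof (induction d)
  case 0 then show ?case using uc by simp
next
  case (Suc d)
  then have "uniformly_convergent_on {a<..<b} (fkn f (Suc (k - Suc d)))"
    by (simp add: Suc_diff_Suc)
  from step_desc[OF ab sm this] show ?case
    unfolding uniformly_convergent_on_def by blast
qed

lemma part_b:
  assumes ab: "a < 0" "0 < b" and sm: "smooth_on {a<..<b} f"
    and uc: "uniformly_convergent_on {a<..<b} (fkn f 1)"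
  shows "uniformly_convergent_on {a<..<b} (fhat_partial f)"
    "\<forall>t\<in>{a<..<b}. (fhat f has_real_derivative fcheck f t) (at t)"
proof -
  obtain g where g: "uniform_limit {a<..<b} (fkn f 1) g sequentially"
    using uc unfolding uniformly_convergent_on_def by blast
  have gc: "fcheck f t = g t" if "t \<in> {a<..<b}" for t
    using tendsto_uniform_limitI[OF g that] unfolding fcheck_def by (rule limI)
  show "uniformly_convergent_on {a<..<b} (fhat_partial f)"
  proof (rule Cauchy_uniformly_convergent, rule lemC[OF ab, where F'="fkn f 1" and c="f 0"])
    show "(fhat_partial f n has_real_derivative fkn f 1 n t) (at t)"
      if "t \<in> {a<..<b}" for n t using partial_deriv[OF sm that] .
    show "fhat_partial f n 0 = f 0" for n by (rule partial_at0)
    show "\<exists>N. \<forall>m\<ge>N. \<forall>n\<ge>N. \<forall>t\<in>{a<..<b}. \<bar>fkn f 1 m t - fkn f 1 n t\<bar> < e"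
      if "e > 0" for e
    proof -
      obtain N where N: "\<forall>n\<ge>N. \<forall>t\<in>{a<..<b}. \<bar>fkn f 1 n t - g t\<bar> < e/2"
        using ulim_eps[OF g, of "e/2"] \<open>e > 0\<close> by auto
      show ?thesis
      proof (intro exI[of _ N] allI impI ballI)
        fix m n t assume "N \<le> m" "N \<le> n" "t \<in> {a<..<b}"
        then have "\<bar>fkn f 1 m t - g t\<bar> < e/2" "\<bar>fkn f 1 n t - g t\<bar> < e/2"
          using N by auto
        then show "\<bar>fkn f 1 m t - fkn f 1 n t\<bar> < e" by linarith
      qed
    qed
  qed
  have "\<exists>h. \<forall>x\<in>{a<..<b}. (\<lambda>n. fhat_partial f n x) \<longlonglongrightarrow> h x \<and>
           (h has_derivative (\<lambda>y. g x * y)) (at x within {a<..<b})"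
  proof (rule has_derivative_sequence[where f'="\<lambda>n x y. fkn f 1 n x * y"])
    show "convex {a<..<b}" by simp
    show "(fhat_partial f n has_derivative (\<lambda>y. fkn f 1 n x * y)) (at x within {a<..<b})"
      if "x \<in> {a<..<b}" for n x
      using partial_deriv[OF sm that, of n] unfolding has_field_derivative_def
      by (rule has_derivative_at_withinI)
    show "\<forall>\<^sub>F n in sequentially. \<forall>x\<in>{a<..<b}. \<forall>h. norm (fkn f 1 n x * h - g x * h) \<le> e * norm h"
      if "e > 0" for e
    proof -
      obtain N where N: "\<forall>n\<ge>N. \<forall>t\<in>{a<..<b}. \<bar>fkn f 1 n t - g t\<bar> < e"
        using ulim_eps[OF g \<open>e > 0\<close>] by auto
      have *: "\<bar>fkn f 1 n x * h - g x * h\<bar> \<le> e * \<bar>h\<bar>" if "n \<ge> N" "x \<in> {a<..<b}" for n x h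
      proof -
        have "\<bar>fkn f 1 n x * h - g x * h\<bar> = \<bar>fkn f 1 n x - g x\<bar> * \<bar>h\<bar>"
          by (simp only: abs_mult[symmetric] left_diff_distrib)
        also have "\<dots> \<le> e * \<bar>h\<bar>"
        proof (rule mult_right_mono)
          have "\<bar>fkn f 1 n x - g x\<bar> < e" using N that by blast
          then show "\<bar>fkn f 1 n x - g x\<bar> \<le> e" by simp
        qed simp
        finally show ?thesis .
      qed
      show ?thesis unfolding eventually_sequentially real_norm_def
        by (intro exI[of _ N] allI impI ballI) (rule *)
    qed
    show "0 \<in> {a<..<b}" using ab by simp
    show "(\<lambda>n. fhat_partial f n 0) \<longlonglongrightarrow> f 0" by (simp add: partial_at0)
  qed
  then obtain h where h0: "\<forall>x\<in>{a<..<b}. (\<lambda>n. fhat_partial f n x) \<longlonglongrightarrow> h x \<and>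
           (h has_derivative (\<lambda>y. g x * y)) (at x within {a<..<b})" by (elim exE)
  have h: "\<And>x. x \<in> {a<..<b} \<Longrightarrow> (\<lambda>n. fhat_partial f n x) \<longlonglongrightarrow> h x"
    "\<And>x. x \<in> {a<..<b} \<Longrightarrow> (h has_derivative (\<lambda>y. g x * y)) (at x within {a<..<b})"
    using h0 by auto
  have fh: "fhat f x = h x" if "x \<in> {a<..<b}" for x
  proof -
    have "(\<lambda>n. fhat_term f n x) sums h x"
      unfolding sums_def LIMSEQ_lessThan_iff_atMost using h(1)[OF that]
      unfolding fhat_partial_def .
    then show ?thesis unfolding fhat_def by (simp add: sums_iff)
  qed
  show "\<forall>t\<in>{a<..<b}. (fhat f has_real_derivative fcheck f t) (at t)"
  proof
    fix t assume t: "t \<in> {a<..<b}"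
    have "(h has_real_derivative g t) (at t within {a<..<b})"
      using h(2)[OF t] unfolding has_field_derivative_def .
    moreover have "at t within {a<..<b} = at t"
      using t by (intro at_within_open) auto
    ultimately have "(h has_real_derivative g t) (at t)"
      by (simp only:)
    then have "(fhat f has_real_derivative g t) (at t)"
      by (rule has_field_derivative_transform_within_open[where S="{a<..<b}"]) (use t fh in auto)
    then show "(fhat f has_real_derivative fcheck f t) (at t)" using gc[OF t] by simp
  qed
qed

theorem theorem2:
  fixes f :: "real \<Rightarrow> real" and a b :: real and k :: nat
  assumes "a < 0" and "0 < b"
    and "smooth_on {a<..<b} f"
    and "k \<ge> 1"
    and "uniformly_convergent_on {a<..<b} (\<lambda>n. fkn f k n)"
  shows "(k \<ge> 2 \<longrightarrow>
            uniformly_convergent_on {a<..<b} (fhat_partial f) \<and>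
            (\<forall>t\<in>{a<..<b}. (\<lambda>n. fhat_term f n t) sums f 0))
       \<and> (k = 1 \<longrightarrow>
            uniformly_convergent_on {a<..<b} (fhat_partial f) \<and>
            (\<forall>t\<in>{a<..<b}. (fhat f has_real_derivative fcheck f t) (at t)) \<and>
            ((\<forall>t\<in>{a<..<b}. fcheck f t = 0) \<longrightarrow>
               (\<forall>t\<in>{a<..<b}. (\<lambda>n. fhat_term f n t) sums f 0)))"
proof (intro conjI impI)
  have uc: "uniformly_convergent_on {a<..<b} (fkn f k)" using assms(5) by simp
  {
    assume k2: "k \<ge> 2"
    have "uniformly_convergent_on {a<..<b} (fkn f (k - (k - 2)))"
      using desc_all[OF assms(1,2,3) uc, of "k - 2"] k2 by simp
    then have "uniformly_convergent_on {a<..<b} (fkn f (Suc 1))" using k2 by (simp add: numeral_2_eq_2)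
    from step_desc[OF assms(1,2,3) this]
    have z: "uniform_limit {a<..<b} (fkn f 1) (\<lambda>_. 0) sequentially" .
    from final_zero[OF assms(1,2,3) z]
    show "uniformly_convergent_on {a<..<b} (fhat_partial f)"
      "\<forall>t\<in>{a<..<b}. (\<lambda>n. fhat_term f n t) sums f 0"
      unfolding uniformly_convergent_on_def by blast+
  }
  {
    assume k1: "k = 1"
    then have uc1: "uniformly_convergent_on {a<..<b} (fkn f 1)" using uc by simp
    from part_b[OF assms(1,2,3) uc1]
    show "uniformly_convergent_on {a<..<b} (fhat_partial f)"
      "\<forall>t\<in>{a<..<b}. (fhat f has_real_derivative fcheck f t) (at t)" by blast+
    assume c0: "\<forall>t\<in>{a<..<b}. fcheck f t = 0"
    have z: "uniform_limit {a<..<b} (fkn f 1) (\<lambda>_. 0) sequentially"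
    proof -
      obtain g where g: "uniform_limit {a<..<b} (fkn f 1) g sequentially"
        using uc1 unfolding uniformly_convergent_on_def by blast
      have "g t = 0" if "t \<in> {a<..<b}" for t
        using tendsto_uniform_limitI[OF g that] c0 that unfolding fcheck_def
        by (metis limI)
      then show ?thesis using g unfolding uniform_limit_sequentially_iff by simp
    qed
    from final_zero(2)[OF assms(1,2,3) z]
    show "\<forall>t\<in>{a<..<b}. (\<lambda>n. fhat_term f n t) sums f 0" .
  }
qed

end
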